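(* Let $T=T_\lambda$ ($\lambda\in(1,2)$) be a tent map with critical point $c$ and kneading sequence $K$. For $n\in\mathbb N$ and $\mathbf s\in\{0,1\}^n$, the sequence $\mathbf s^\frown\mathcal I(c)$ is the itinerary of some pre-critical point (a point $p$ with $T^i(p)=c$ for some $i$) in $[0,T(c)]$ if and only if at least one of the following holds: (1) $\mathbf s=0^n$; (2) $\sigma^k(\mathbf s^\frown\mathcal I(c))\prec K$ for every $0\le k\le n$; (3) $c$ lies in a periodic orbit of period $m$ with $\mathcal I(c)=(C^\frown\mathbf t)^\infty$ (so $\mathbf t\in\{0,1\}^{m-1}$) and $\mathbf s=\sigma^k(\mathbf t)$ (the word $\mathbf t$ with its first $k$ symbols deleted) for some $0\le k<m-1$.
   Context: For $\lambda\in(1,2]$ the tent map $T_\lambda:[0,1]\to[0,1]$ is $T_\lambda(x)=\lambda x$ on $[0,1/2]$ and $\lambda(1-x)$ on $[1/2,1]$, with critical point $c=1/2$. $\Omega=\{0,1,C\}$. The address of $x$ is $0$ if $x<c$, $C$ if $x=c$, $1$ if $x>c$; the itinerary $\mathcal I(x)$ is the sequence of addresses of $x,T(x),T^2(x),\dots$; $\mathcal I^+(x)=\lim_{y\downarrow x}\mathcal I(y)$ in the product topology on $\Omega^{\mathbb N}$. The kneading sequence is $K=\sigma(\mathcal I^+(c))$, $\sigma$ the shift; $^\frown$ denotes concatenation. A word is even if it contains an even number of $1$'s, odd otherwise. Parity lexicographic order: $0<C<1$; for sequences $\mathbf s\ne\mathbf t$ first differing at index $k$, $\mathbf s\prec\mathbf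 t$ iff either $s_0\dots s_{k-1}$ is even and $s_k<t_k$, or it is odd and $s_k>t_k$. *)

theory Defs
  imports Complex_Main
begin

datatype sym = S0 | SC | S1

fun sym_rank :: "sym \<Rightarrow> nat" where
  "sym_rank S0 = 0" | "sym_rank SC = 1" | "sym_rank S1 = 2"

definition crit :: real where "crit = 1/2"

definition tent :: "real \<Rightarrow> real \<Rightarrow> real" where
  "tent lam x = (if x \<le> 1/2 then lam * x else lam * (1 - x))"

definition addr :: "real \<Rightarrow> sym" where
  "addr x = (if x < crit then S0 else if x = crit then SC else S1)"

definition itin :: "real \<Rightarrow> real \<Rightarrow> (nat \<Rightarrow> sym)" where
  "itin lam x = (\<lambda>i. addr ((tent lam ^^ i) x))"

text \<open>Right limit of itineraries in the product topology (discrete factors):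
  coordinatewise eventual equality as y tends to x from the right.\<close>
definition itin_plus :: "real \<Rightarrow> real \<Rightarrow> (nat \<Rightarrow> sym)" where
  "itin_plus lam x = (THE s. \<forall>i. eventually (\<lambda>y. itin lam y i = s i) (at_right x))"

definition shift :: "nat \<Rightarrow> (nat \<Rightarrow> sym) \<Rightarrow> (nat \<Rightarrow> sym)" where
  "shift k u = (\<lambda>i. u (i + k))"

definition kneading :: "real \<Rightarrow> (nat \<Rightarrow> sym)" where
  "kneading lam = shift 1 (itin_plus lam crit)"

definition conc :: "sym list \<Rightarrow> (nat \<Rightarrow> sym) \<Rightarrow> (nat \<Rightarrow> sym)" where
  "conc w u = (\<lambda>i. if i < length w then w ! i else u (i - length w))"

definition per :: "sym list \<Rightarrow> (nat \<Rightarrow> sym)" where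
  "per w = (\<lambda>i. w ! (i mod length w))"

definition ones :: "(nat \<Rightarrow> sym) \<Rightarrow> nat \<Rightarrow> nat" where
  "ones s k = card {i. i < k \<and> s i = S1}"

definition plex_less :: "(nat \<Rightarrow> sym) \<Rightarrow> (nat \<Rightarrow> sym) \<Rightarrow> bool" where
  "plex_less s t = (\<exists>k. (\<forall>j<k. s j = t j) \<and> s k \<noteq> t k \<and>
      ((even (ones s k) \<and> sym_rank (s k) < sym_rank (t k)) \<or>
       (odd (ones s k) \<and> sym_rank (s k) > sym_rank (t k))))"

end

theory Submission
  imports Defs
begin

lemma ones_cong: "(\<forall>i<k. s i = t i) \<Longrightarrow> ones s k = ones t k"
  unfolding ones_def by (rule arg_cong[where f=card]) auto

lemma ones_Suc: "ones s (Suc k) = ones s k + (if s k = S1 then 1 else 0)"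
proof -
  have "{i. i < Suc k \<and> s i = S1} = {i. i < k \<and> s i = S1} \<union> (if s k = S1 then {k} else {})"
    by (auto simp: less_Suc_eq)
  moreover have "finite {i. i < k \<and> s i = S1}" by simp
  moreover have "k \<notin> {i. i < k \<and> s i = S1}" by simp
  ultimately show ?thesis unfolding ones_def by auto
qed

lemma rank_inj: "sym_rank a = sym_rank b \<Longrightarrow> a = b"
  by (cases a; cases b) auto

lemma plex_irrefl: "\<not> plex_less s s"
  by (simp add: plex_less_def)

lemma plex_asym: assumes "plex_less s t" shows "\<not> plex_less t s"
proof
  assume "plex_less t s"
  obtain k where k: "\<forall>j<k. s j = t j" "s k \<noteq> t k"
    "(even (ones s k) \<and> sym_rank (s k) < sym_rank (t k)) \<or> (odd (ones s k) \<and> sym_rank (s k) > sym_rank (t k))"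
    using assms unfolding plex_less_def by blast
  obtain k' where k': "\<forall>j<k'. t j = s j" "t k' \<noteq> s k'"
    "(even (ones t k') \<and> sym_rank (t k') < sym_rank (s k')) \<or> (odd (ones t k') \<and> sym_rank (t k') > sym_rank (s k'))"
    using \<open>plex_less t s\<close> unfolding plex_less_def by blast
  have "k = k'" using k k' by (metis linorder_neqE_nat)
  moreover have "ones s k = ones t k" using k(1) by (rule ones_cong)
  ultimately show False using k(3) k'(3) by auto
qed

lemma plex_trans: assumes "plex_less s t" "plex_less t u" shows "plex_less s u"
proof -
  obtain k where k: "\<forall>j<k. s j = t j" "s k \<noteq> t k"
    "(even (ones s k) \<and> sym_rank (s k) < sym_rank (t k)) \<or> (odd (ones s k) \<and> sym_rank (s k) > sym_rank (t k))"
    using assms(1) unfolding plex_less_def by blast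
  obtain k' where k': "\<forall>j<k'. t j = u j" "t k' \<noteq> u k'"
    "(even (ones t k') \<and> sym_rank (t k') < sym_rank (u k')) \<or> (odd (ones t k') \<and> sym_rank (t k') > sym_rank (u k'))"
    using assms(2) unfolding plex_less_def by blast
  consider "k < k'" | "k' < k" | "k = k'" by linarith
  then show ?thesis
  proof cases
    case 1
    then have "\<forall>j<k. s j = u j" "u k = t k" using k k' by auto
    then show ?thesis unfolding plex_less_def using k by (intro exI[of _ k]) auto
  next
    case 2
    then have "\<forall>j<k'. s j = u j" "s k' = t k'" using k k' by auto
    moreover have "ones s k' = ones t k'" using k(1) 2 by (intro ones_cong) auto
    ultimately show ?thesis unfolding plex_less_def using k' by (intro exI[of _ k']) auto
  next
    case 3
    have "ones s k = ones t k" using k(1) by (rule ones_cong)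
    then have "\<forall>j<k. s j = u j"
      "(even (ones s k) \<and> sym_rank (s k) < sym_rank (u k)) \<or> (odd (ones s k) \<and> sym_rank (s k) > sym_rank (u k))"
      using k k' 3 by auto
    moreover then have "s k \<noteq> u k" by auto
    ultimately show ?thesis unfolding plex_less_def by blast
  qed
qed

lemma plex_total: assumes "s \<noteq> t" shows "plex_less s t \<or> plex_less t s"
proof -
  obtain i where "s i \<noteq> t i" using assms by blast
  define k where "k = (LEAST i. s i \<noteq> t i)"
  have kd: "s k \<noteq> t k" unfolding k_def by (rule LeastI) fact
  have kp: "\<forall>j<k. s j = t j" unfolding k_def using not_less_Least by blast
  have o: "ones s k = ones t k" using kp by (rule ones_cong)
  have r: "sym_rank (s k) \<noteq> sym_rank (t k)" using kd rank_inj by blast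
  show ?thesis
  proof (cases "even (ones s k)")
    case True
    show ?thesis
    proof (cases "sym_rank (s k) < sym_rank (t k)")
      case True with \<open>even _\<close> kd kp show ?thesis unfolding plex_less_def by blast
    next
      case False
      then have "sym_rank (t k) < sym_rank (s k)" using r by linarith
      with \<open>even _\<close> o kd kp show ?thesis unfolding plex_less_def by (metis)
    qed
  next
    case False
    show ?thesis
    proof (cases "sym_rank (s k) > sym_rank (t k)")
      case True with \<open>odd _\<close> kd kp show ?thesis unfolding plex_less_def by blast
    next
      case False
      then have "sym_rank (t k) > sym_rank (s k)" using r by linarith
      with \<open>odd _\<close> o kd kp show ?thesis unfolding plex_less_def by (metis)
    qed
  qed
qed

lemma plex_agree_right: assumes "plex_less u v"
  shows "\<exists>j. \<forall>w. (\<forall>i\<le>j. w i = v i) \<longrightarrow> plex_less u w"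
proof -
  obtain k where k: "\<forall>j<k. u j = v j" "u k \<noteq> v k"
    "(even (ones u k) \<and> sym_rank (u k) < sym_rank (v k)) \<or> (odd (ones u k) \<and> sym_rank (u k) > sym_rank (v k))"
    using assms unfolding plex_less_def by blast
  show ?thesis
  proof (intro exI allI impI)
    fix w assume w: "\<forall>i\<le>k. w i = v i"
    then have "\<forall>j<k. u j = w j" "w k = v k" using k by auto
    then show "plex_less u w" unfolding plex_less_def using k by (intro exI[of _ k]) auto
  qed
qed

lemma plex_agree_left: assumes "plex_less v u"
  shows "\<exists>j. \<forall>w. (\<forall>i\<le>j. w i = v i) \<longrightarrow> plex_less w u"
proof -
  obtain k where k: "\<forall>j<k. v j = u j" "v k \<noteq> u k"
    "(even (ones v k) \<and> sym_rank (v k) < sym_rank (u k)) \<or> (odd (ones v k) \<and> sym_rank (v k) > sym_rank (u k))"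
    using assms unfolding plex_less_def by blast
  show ?thesis
  proof (intro exI allI impI)
    fix w assume w: "\<forall>i\<le>k. w i = v i"
    then have "\<forall>j<k. w j = u j" "w k = v k" using k by auto
    moreover have "ones w k = ones v k" using w by (intro ones_cong) auto
    ultimately show "plex_less w u" unfolding plex_less_def using k by (intro exI[of _ k]) auto
  qed
qed



lemma tent_crit: "tent lam crit = lam / 2"
  by (simp add: tent_def crit_def)

lemma itin_shift: "shift k (itin lam p) = itin lam ((tent lam ^^ k) p)"
  unfolding shift_def itin_def by (simp add: funpow_add)

lemma itin_cons: "itin lam p = (\<lambda>i. if i = 0 then addr p else itin lam (tent lam p) (i - 1))"
proof
  fix i show "itin lam p i = (if i = 0 then addr p else itin lam (tent lam p) (i - 1))"
    by (cases i) (simp_all add: itin_def funpow_Suc_right del: funpow.simps)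
qed

lemma itin_Suc: "itin lam p (Suc i) = itin lam (tent lam p) i"
  by (subst itin_cons) simp

lemma itin_0: "itin lam p 0 = addr p"
  by (simp add: itin_def)

lemma conc_cons: "conc (a#w) u = (\<lambda>i. if i = 0 then a else conc w u (i - 1))"
proof
  fix i show "conc (a#w) u i = (if i = 0 then a else conc w u (i - 1))"
    by (cases i) (auto simp: conc_def)
qed

lemma shift_conc_Suc: "shift (Suc k) (conc (a#w) u) = shift k (conc w u)"
  unfolding shift_def conc_def by auto

lemma addr_mono: "a \<le> b \<Longrightarrow> sym_rank (addr a) \<le> sym_rank (addr b)"
  by (auto simp: addr_def)

lemma addr_SC: "addr a = SC \<longleftrightarrow> a = crit"
  by (auto simp: addr_def)

lemma monoA:
  assumes "0 < lam" "x < y"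
  shows "(\<forall>i<N. itin lam x i = itin lam y i \<and> itin lam x i \<noteq> SC) \<longrightarrow>
    (if even (ones (itin lam x) N) then (tent lam ^^ N) x < (tent lam ^^ N) y
     else (tent lam ^^ N) x > (tent lam ^^ N) y)"
proof (induction N)
  case 0 then show ?case using assms by (simp add: ones_def)
next
  case (Suc N)
  show ?case
  proof
    assume h: "\<forall>i<Suc N. itin lam x i = itin lam y i \<and> itin lam x i \<noteq> SC"
    define a where "a = (tent lam ^^ N) x"
    define b where "b = (tent lam ^^ N) y"
    have "\<forall>i<N. itin lam x i = itin lam y i \<and> itin lam x i \<noteq> SC" using h by (metis less_SucI)
    then have IH: "if even (ones (itin lam x) N) then a < b else a > b"
      using Suc.IH unfolding a_def b_def by blast
    have ab: "addr a = addr b" "addr a \<noteq> SC" using h unfolding a_def b_def itin_def by auto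
    have ta: "(tent lam ^^ Suc N) x = tent lam a" "(tent lam ^^ Suc N) y = tent lam b"
      by (simp_all add: a_def b_def)
    have xa: "itin lam x N = addr a" by (simp add: itin_def a_def)
    show "if even (ones (itin lam x) (Suc N)) then (tent lam ^^ Suc N) x < (tent lam ^^ Suc N) y
     else (tent lam ^^ Suc N) x > (tent lam ^^ Suc N) y"
    proof (cases "addr a")
      case S0
      then have "a < 1/2" "b < 1/2" using ab by (auto simp: addr_def crit_def split: if_splits)
      then show ?thesis using IH S0 xa assms(1) unfolding ta ones_Suc by (auto simp: tent_def)
    next
      case SC then show ?thesis using ab by simp
    next
      case S1
      then have "a > 1/2" "b > 1/2" using ab by (auto simp: addr_def crit_def split: if_splits)
      then show ?thesis using IH S1 xa assms(1) unfolding ta ones_Suc by (auto simp: tent_def)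
    qed
  qed
qed

lemma mono_itin:
  assumes "0 < lam" "x < y"
  shows "itin lam x = itin lam y \<or> plex_less (itin lam x) (itin lam y)"
proof (cases "itin lam x = itin lam y")
  case True then show ?thesis by simp
next
  case False
  then have ne: "itin lam x \<noteq> itin lam y" .
  then obtain i where "itin lam x i \<noteq> itin lam y i" by blast
  define k where "k = (LEAST i. itin lam x i \<noteq> itin lam y i)"
  have kd: "itin lam x k \<noteq> itin lam y k" unfolding k_def by (rule LeastI) fact
  have kp: "\<forall>j<k. itin lam x j = itin lam y j" unfolding k_def using not_less_Least by blast
  have nc: "\<forall>j<k. itin lam x j \<noteq> SC"
  proof (intro allI impI notI)
    fix j assume j: "j < k" "itin lam x j = SC"
    then have "(tent lam ^^ j) x = crit" "(tent lam ^^ j) y = crit"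
      using kp by (metis addr_SC itin_def)+
    then have "(tent lam ^^ (k - j + j)) x = (tent lam ^^ (k - j + j)) y"
      by (simp add: funpow_add)
    then show False using kd j by (simp add: itin_def)
  qed
  have A: "if even (ones (itin lam x) k) then (tent lam ^^ k) x < (tent lam ^^ k) y
     else (tent lam ^^ k) x > (tent lam ^^ k) y"
    using monoA[OF assms, of k] kp nc by auto
  have r: "sym_rank (itin lam x k) \<noteq> sym_rank (itin lam y k)" using kd rank_inj by blast
  have "plex_less (itin lam x) (itin lam y)"
    unfolding plex_less_def
  proof (intro exI[of _ k] conjI)
    show "\<forall>j<k. itin lam x j = itin lam y j" by (rule kp)
    show "itin lam x k \<noteq> itin lam y k" by (rule kd)
    show "(even (ones (itin lam x) k) \<and> sym_rank (itin lam x k) < sym_rank (itin lam y k)) \<or>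
        (odd (ones (itin lam x) k) \<and> sym_rank (itin lam y k) < sym_rank (itin lam x k))"
    proof (cases "even (ones (itin lam x) k)")
      case True
      then have "(tent lam ^^ k) x \<le> (tent lam ^^ k) y" using A by auto
      then have "sym_rank (itin lam x k) \<le> sym_rank (itin lam y k)"
        unfolding itin_def by (auto intro: addr_mono)
      then show ?thesis using r True by auto
    next
      case False
      then have "(tent lam ^^ k) y \<le> (tent lam ^^ k) x" using A by auto
      then have "sym_rank (itin lam y k) \<le> sym_rank (itin lam x k)"
        unfolding itin_def by (auto intro: addr_mono)
      then show ?thesis using r False by auto
    qed
  qed
  then show ?thesis by simp
qed



lemma side_affine:
  fixes a b c d :: real
  assumes "b \<noteq> 0"
  shows "eventually (\<lambda>y. a + b*y < d) (at_right c) \<or> eventually (\<lambda>y. a + b*y > d) (at_right c)"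
proof -
  have t: "((\<lambda>y. a + b*y) \<longlongrightarrow> a + b*c) (at_right c)" by (intro tendsto_intros)
  consider "a + b*c < d" | "a + b*c > d" | "a + b*c = d" by linarith
  then show ?thesis
  proof cases
    case 1 then show ?thesis using order_tendstoD(2)[OF t] by blast
  next
    case 2 then show ?thesis using order_tendstoD(1)[OF t] by blast
  next
    case 3
    have e: "eventually (\<lambda>y. c < y) (at_right c)" by (rule eventually_at_right_less)
    show ?thesis
    proof (cases "b > 0")
      case True
      have "eventually (\<lambda>y. a + b*y > d) (at_right c)"
        using e by eventually_elim (use True 3 in \<open>auto simp: algebra_simps intro: mult_strict_left_mono\<close>)
      then show ?thesis by blast
    next
      case False
      then have "b < 0" using assms by linarith
      have "eventually (\<lambda>y. a + b*y < d) (at_right c)"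
        using e by eventually_elim (use \<open>b < 0\<close> 3 in \<open>auto simp: algebra_simps intro: mult_strict_left_mono_neg\<close>)
      then show ?thesis by blast
    qed
  qed
qed

lemma affine_iter:
  assumes "0 < lam"
  shows "\<exists>a b. b \<noteq> 0 \<and> eventually (\<lambda>y. (tent lam ^^ i) y = a + b*y) (at_right crit)"
proof (induction i)
  case 0 show ?case by (intro exI[of _ 0] exI[of _ 1]) simp
next
  case (Suc i)
  then obtain a b where ab: "b \<noteq> 0" "eventually (\<lambda>y. (tent lam ^^ i) y = a + b*y) (at_right crit)"
    by blast
  from side_affine[OF ab(1), where d="1/2" and c=crit and a=a]
  show ?case
  proof
    assume e: "eventually (\<lambda>y. a + b*y < 1/2) (at_right crit)"
    have ev: "eventually (\<lambda>y. (tent lam ^^ Suc i) y = lam*a + (lam*b)*y) (at_right crit)"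
      using ab(2) e by eventually_elim (auto simp: tent_def algebra_simps)
    have "lam*b \<noteq> 0" using ab(1) assms by simp
    with ev show ?case by blast
  next
    assume e: "eventually (\<lambda>y. a + b*y > 1/2) (at_right crit)"
    have ev: "eventually (\<lambda>y. (tent lam ^^ Suc i) y = lam*(1-a) + (-lam*b)*y) (at_right crit)"
      using ab(2) e by eventually_elim (auto simp: tent_def algebra_simps)
    have "-lam*b \<noteq> 0" using ab(1) assms by simp
    with ev show ?case by blast
  qed
qed

lemma side_iter:
  assumes "0 < lam"
  shows "eventually (\<lambda>y. (tent lam ^^ i) y < crit) (at_right crit) \<or>
         eventually (\<lambda>y. (tent lam ^^ i) y > crit) (at_right crit)"
proof -
  obtain a b where ab: "b \<noteq> 0" "eventually (\<lambda>y. (tent lam ^^ i) y = a + b*y) (at_right crit)"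
    using affine_iter[OF assms] by blast
  from side_affine[OF ab(1), where d=crit and c=crit and a=a] show ?thesis
  proof
    assume "eventually (\<lambda>y. a + b*y < crit) (at_right crit)"
    with ab(2) have "eventually (\<lambda>y. (tent lam ^^ i) y < crit) (at_right crit)"
      by eventually_elim auto
    then show ?thesis by blast
  next
    assume "eventually (\<lambda>y. a + b*y > crit) (at_right crit)"
    with ab(2) have "eventually (\<lambda>y. (tent lam ^^ i) y > crit) (at_right crit)"
      by eventually_elim auto
    then show ?thesis by blast
  qed
qed

definition kp :: "real \<Rightarrow> nat \<Rightarrow> sym" where
  "kp lam i = (if eventually (\<lambda>y. (tent lam ^^ i) y < crit) (at_right crit) then S0 else S1)"

lemma kp_ev:
  assumes "0 < lam"
  shows "eventually (\<lambda>y. itin lam y i = kp lam i) (at_right crit)"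
proof (cases "eventually (\<lambda>y. (tent lam ^^ i) y < crit) (at_right crit)")
  case True
  then show ?thesis unfolding kp_def by (simp add: itin_def addr_def eventually_mono)
next
  case False
  then have "eventually (\<lambda>y. (tent lam ^^ i) y > crit) (at_right crit)"
    using side_iter[OF assms, of i] by blast
  then show ?thesis using False unfolding kp_def
    by (simp add: itin_def addr_def) (rule eventually_mono, assumption, auto)
qed

lemma itin_plus_crit:
  assumes "0 < lam"
  shows "itin_plus lam crit = kp lam"
  unfolding itin_plus_def
proof (rule the_equality)
  show "\<forall>i. eventually (\<lambda>y. itin lam y i = kp lam i) (at_right crit)"
    using kp_ev[OF assms] by blast
next
  fix s assume s: "\<forall>i. eventually (\<lambda>y. itin lam y i = s i) (at_right crit)"
  show "s = kp lam"
  proof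
    fix i
    have "eventually (\<lambda>y. s i = kp lam i) (at_right crit)"
      using s[rule_format, of i] kp_ev[OF assms, of i] by eventually_elim auto
    then show "s i = kp lam i" by simp
  qed
qed

lemma kneading_eq: "0 < lam \<Longrightarrow> kneading lam i = kp lam (Suc i)"
  by (simp add: kneading_def shift_def itin_plus_crit)

lemma K_ev:
  assumes "0 < lam"
  shows "eventually (\<lambda>y. itin lam (tent lam y) i = kneading lam i) (at_right crit)"
  using kp_ev[OF assms, of "Suc i"] by (simp add: kneading_eq[OF assms] itin_Suc)

lemma K_noC: "0 < lam \<Longrightarrow> kneading lam i \<noteq> SC"
  by (simp add: kneading_eq kp_def)

lemma K0:
  assumes "1 < lam"
  shows "kneading lam 0 = S1"
proof -
  have l: "0 < lam" using assms by simp
  have t: "((\<lambda>y. lam*(1-y)) \<longlongrightarrow> lam*(1-crit)) (at_right crit)" by (intro tendsto_intros)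
  have "crit < lam*(1-crit)" using assms by (simp add: crit_def)
  from order_tendstoD(1)[OF t this] eventually_at_right_less[of crit]
  have e: "eventually (\<lambda>y. tent lam y > crit) (at_right crit)"
    by eventually_elim (auto simp: tent_def crit_def)
  have "eventually (\<lambda>y. itin lam (tent lam y) 0 = S1) (at_right crit)"
    using e by eventually_elim (auto simp: itin_def addr_def)
  moreover note K_ev[OF l, of 0]
  ultimately have "eventually (\<lambda>y. kneading lam 0 = S1) (at_right crit)"
    by eventually_elim auto
  then show ?thesis by simp
qed

lemma tent_lt_crit_right:
  assumes "0 < lam" "crit < y"
  shows "tent lam y < tent lam crit"
  using assms by (auto simp: tent_def crit_def algebra_simps)

lemma L4:
  assumes "1 < lam"
  shows "\<not> plex_less (itin lam (tent lam crit)) (kneading lam)"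
proof
  have l: "0 < lam" using assms by simp
  assume "plex_less (itin lam (tent lam crit)) (kneading lam)"
  then obtain j where j: "\<forall>w. (\<forall>i\<le>j. w i = kneading lam i) \<longrightarrow> plex_less (itin lam (tent lam crit)) w"
    using plex_agree_right by blast
  have "eventually (\<lambda>y. \<forall>i\<in>{..j}. itin lam (tent lam y) i = kneading lam i) (at_right crit)"
    using K_ev[OF l] by (intro eventually_ball_finite) auto
  moreover note eventually_at_right_less[of crit]
  ultimately have "eventually (\<lambda>y. plex_less (itin lam (tent lam crit)) (itin lam (tent lam y))
      \<and> tent lam y < tent lam crit) (at_right crit)"
    by eventually_elim (use j tent_lt_crit_right[OF l] in auto)
  then obtain y where y: "plex_less (itin lam (tent lam crit)) (itin lam (tent lam y))"
      "tent lam y < tent lam crit"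
    using eventually_happens by fastforce
  from mono_itin[OF l y(2)] y(1) show False
    using plex_asym plex_irrefl by metis
qed

lemma below_K:
  assumes "1 < lam" "x < tent lam crit" "SC \<in> range (itin lam x)"
  shows "plex_less (itin lam x) (kneading lam)"
proof -
  have l: "0 < lam" using assms by simp
  have nK: "\<not> plex_less (kneading lam) (itin lam x)"
  proof
    assume "plex_less (kneading lam) (itin lam x)"
    then obtain j where j: "\<forall>w. (\<forall>i\<le>j. w i = kneading lam i) \<longrightarrow> plex_less w (itin lam x)"
      using plex_agree_left by blast
    have "eventually (\<lambda>y. \<forall>i\<in>{..j}. itin lam (tent lam y) i = kneading lam i) (at_right crit)"
      using K_ev[OF l] by (intro eventually_ball_finite) auto
    moreover have "eventually (\<lambda>y. x < tent lam y) (at_right crit)"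
    proof -
      have t: "((\<lambda>y. lam*(1-y)) \<longlongrightarrow> lam*(1-crit)) (at_right crit)" by (intro tendsto_intros)
      have "x < lam*(1-crit)" using assms(2) by (simp add: tent_def crit_def)
      from order_tendstoD(1)[OF t this] eventually_at_right_less[of crit]
      show ?thesis by eventually_elim (auto simp: tent_def crit_def)
    qed
    ultimately have "eventually (\<lambda>y. plex_less (itin lam (tent lam y)) (itin lam x)
        \<and> x < tent lam y) (at_right crit)"
      by eventually_elim (use j in auto)
    then obtain y where y: "plex_less (itin lam (tent lam y)) (itin lam x)" "x < tent lam y"
      using eventually_happens by fastforce
    from mono_itin[OF l y(2)] y(1) show False
      using plex_asym plex_irrefl by metis
  qed
  have "itin lam x \<noteq> kneading lam" using assms(3) K_noC[OF l] by (metis rangeE)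
  then show ?thesis using plex_total nK by blast
qed



lemma shift0[simp]: "shift 0 u = u" by (simp add: shift_def)
lemma conc_Nil[simp]: "conc [] u = u" by (simp add: conc_def)

lemma tent_range:
  assumes "0 < lam" "lam \<le> 2" "0 \<le> x" "x \<le> lam/2"
  shows "0 \<le> (tent lam ^^ k) x \<and> (tent lam ^^ k) x \<le> lam/2"
proof (induction k)
  case 0 then show ?case using assms by simp
next
  case (Suc k)
  define z where "z = (tent lam ^^ k) x"
  have "0 \<le> z" "z \<le> 1" using Suc assms unfolding z_def by auto
  then have "0 \<le> tent lam z \<and> tent lam z \<le> lam/2"
    using assms(1) by (auto simp: tent_def mult_left_le mult_nonneg_nonneg)
  then show ?case by (simp add: z_def)
qed

lemma tent_eq_max: "0 < lam \<Longrightarrow> tent lam x = tent lam crit \<Longrightarrow> x = crit"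
  by (auto simp: tent_def crit_def split: if_splits)

lemma realize:
  assumes "1 < lam" "lam < 2"
  shows "set s \<subseteq> {S0, S1} \<longrightarrow> (\<forall>k\<le>length s. plex_less (shift k (conc s (itin lam crit))) (kneading lam))
    \<longrightarrow> (\<exists>p. 0 \<le> p \<and> p \<le> tent lam crit \<and> (tent lam ^^ length s) p = crit \<and> itin lam p = conc s (itin lam crit))"
proof (induction s)
  case Nil
  show ?case using assms by (intro impI exI[of _ crit]) (auto simp: tent_def crit_def)
next
  case (Cons a s)
  have l: "0 < lam" using assms by simp
  show ?case
  proof (intro impI)
    assume set: "set (a # s) \<subseteq> {S0, S1}"
      and H: "\<forall>k\<le>length (a # s). plex_less (shift k (conc (a # s) (itin lam crit))) (kneading lam)"
    have "\<forall>k\<le>length s. plex_less (shift k (conc s (itin lam crit))) (kneading lam)"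
    proof (intro allI impI)
      fix k assume "k \<le> length s"
      then show "plex_less (shift k (conc s (itin lam crit))) (kneading lam)"
        using H[rule_format, of "Suc k"] by (simp add: shift_conc_Suc)
    qed
    then obtain q where q: "0 \<le> q" "q \<le> tent lam crit" "(tent lam ^^ length s) q = crit"
        "itin lam q = conc s (itin lam crit)"
      using Cons set by auto
    have "plex_less (itin lam q) (kneading lam)"
      using H[rule_format, of 1] q(4) by (simp add: shift_conc_Suc[of 0, simplified])
    then have "q \<noteq> tent lam crit" using L4[OF assms(1)] by auto
    then have qlt: "q < lam/2" using q(2) by (simp add: tent_crit)
    have H0: "plex_less (conc (a # s) (itin lam crit)) (kneading lam)"
      using H[rule_format, of 0] by simp
    have a: "a = S0 \<or> a = S1" using set by auto
    then show "\<exists>p. 0 \<le> p \<and> p \<le> tent lam crit \<and> (tent lam ^^ length (a # s)) p = crit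
        \<and> itin lam p = conc (a # s) (itin lam crit)"
    proof
      assume a0: "a = S0"
      define p where "p = q / lam"
      have p1: "p < 1/2" using qlt l unfolding p_def by (simp add: field_simps)
      have p0: "0 \<le> p" using q(1) l unfolding p_def by simp
      have tp: "tent lam p = q" using p1 l unfolding p_def tent_def by simp
      have it: "itin lam p = conc (a # s) (itin lam crit)"
        apply (subst itin_cons, subst conc_cons)
        using p1 a0 tp q(4) by (auto simp: addr_def crit_def)
      have "(tent lam ^^ length (a # s)) p = crit"
        using q(3) tp by (simp add: funpow_Suc_right del: funpow.simps)
      moreover have "p \<le> tent lam crit" using p1 assms by (simp add: tent_crit)
      ultimately show ?thesis using p0 it by blast
    next
      assume a1: "a = S1"
      define p where "p = 1 - q / lam"
      have p1: "p > 1/2" using qlt l unfolding p_def by (simp add: field_simps)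
      have tp: "tent lam p = q" using p1 l unfolding p_def tent_def by (simp add: field_simps)
      have p0: "0 \<le> p" using p1 by simp
      have it: "itin lam p = conc (a # s) (itin lam crit)"
        apply (subst itin_cons, subst conc_cons)
        using p1 a1 tp q(4) by (auto simp: addr_def crit_def)
      have "(tent lam ^^ length (a # s)) p = crit"
        using q(3) tp by (simp add: funpow_Suc_right del: funpow.simps)
      moreover have "p \<le> tent lam crit"
      proof (rule ccontr)
        assume "\<not> p \<le> tent lam crit"
        then have "tent lam crit < p" by simp
        from mono_itin[OF l this] have m: "itin lam (tent lam crit) = itin lam p \<or>
            plex_less (itin lam (tent lam crit)) (itin lam p)" .
        have "kneading lam = itin lam (tent lam crit) \<or> plex_less (kneading lam) (itin lam (tent lam crit))"
          using L4[OF assms(1)] plex_total by blast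
        then show False using m H0 it plex_trans plex_irrefl by metis
      qed
      ultimately show ?thesis using p0 it by blast
    qed
  qed
qed

lemma per_iter:
  assumes "(tent lam ^^ m) crit = crit"
  shows "(tent lam ^^ (q*m + r)) crit = (tent lam ^^ r) crit"
proof (induction q)
  case 0 then show ?case by simp
next
  case (Suc q)
  have "Suc q*m + r = (q*m + r) + m" by simp
  then have "(tent lam ^^ (Suc q*m + r)) crit = (tent lam ^^ (q*m + r)) ((tent lam ^^ m) crit)"
    by (metis comp_apply funpow_add)
  then show ?case using Suc assms by simp
qed

lemma per_mod:
  assumes "(tent lam ^^ m) crit = crit"
  shows "(tent lam ^^ i) crit = (tent lam ^^ (i mod m)) crit"
  using per_iter[OF assms, of "i div m" "i mod m"] by simp



theorem mainTheorem5:
  fixes lam :: real and n :: nat and s :: "sym list"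
  assumes "1 < lam" and "lam < 2"
    and "length s = n" and "set s \<subseteq> {S0, S1}"
  shows "(\<exists>p. 0 \<le> p \<and> p \<le> tent lam crit \<and> (\<exists>i. (tent lam ^^ i) p = crit)
            \<and> itin lam p = conc s (itin lam crit))
     \<longleftrightarrow>
     (s = replicate n S0
      \<or> (\<forall>k\<le>n. plex_less (shift k (conc s (itin lam crit))) (kneading lam))
      \<or> (\<exists>m t k. 1 \<le> m \<and> (tent lam ^^ m) crit = crit
            \<and> (\<forall>j. 0 < j \<and> j < m \<longrightarrow> (tent lam ^^ j) crit \<noteq> crit)
            \<and> length t = m - 1 \<and> set t \<subseteq> {S0, S1}
            \<and> itin lam crit = per (SC # t)
            \<and> k < m - 1 \<and> s = drop k t))"
  (is "?L \<longleftrightarrow> ?A \<or> ?B \<or> ?C")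
proof -
  have l: "0 < lam" using assms by simp
  let ?Ic = "itin lam crit"
  have AB: "?A \<Longrightarrow> ?B"
  proof (intro allI impI)
    fix k assume A: ?A and k: "k \<le> n"
    have K0': "kneading lam 0 = S1" using K0[OF assms(1)] .
    have "shift k (conc s ?Ic) 0 = (if k < n then S0 else SC)"
      using A k assms(3) by (auto simp: shift_def conc_def itin_def addr_def)
    then show "plex_less (shift k (conc s ?Ic)) (kneading lam)"
      unfolding plex_less_def using K0' by (intro exI[of _ 0]) (auto simp: ones_def)
  qed
  have BL: "?B \<Longrightarrow> ?L"
    using realize[OF assms(1,2), of s] assms(3,4) by blast
  have CL: "?C \<Longrightarrow> ?L"
  proof -
    assume ?C
    then obtain m t k where C: "1 \<le> m" "(tent lam ^^ m) crit = crit"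
      "length t = m - 1" "itin lam crit = per (SC # t)" "k < m - 1" "s = drop k t" by blast
    define p where "p = (tent lam ^^ (Suc k)) crit"
    have pr: "0 \<le> p \<and> p \<le> lam/2"
      using tent_range[OF l _ _ _, of "lam/2" k] assms unfolding p_def
      by (simp add: funpow_Suc_right tent_crit del: funpow.simps)
    have mk: "m = (m - Suc k) + Suc k" using C(5) by simp
    have "(tent lam ^^ (m - Suc k)) p = (tent lam ^^ ((m - Suc k) + Suc k)) crit"
      unfolding p_def by (simp only: funpow_add comp_apply)
    then have "(tent lam ^^ (m - Suc k)) p = crit" using C(2) mk by simp
    moreover have "itin lam p = conc s ?Ic"
    proof
      fix i
      have "itin lam p i = shift (Suc k) ?Ic i" unfolding p_def itin_shift by simp
      then have "itin lam p i = ?Ic (i + Suc k)" by (simp add: shift_def)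
      also have "\<dots> = conc s ?Ic i"
      proof (cases "i + Suc k < m")
        case True
        then have "i < m - Suc k" by simp
        then show ?thesis using C by (simp add: per_def conc_def add.commute)
      next
        case False
        then have e: "i + Suc k = (i - (m - 1 - k)) + m" using C by auto
        have "per (SC # t) (i + Suc k) = per (SC # t) (i - (m - 1 - k))"
          unfolding per_def using C(1,3) by (subst e) simp
        moreover have "\<not> i < m - Suc k" "i - (m - 1 - k) = Suc (i + k) - m" using False C by auto
        ultimately show ?thesis using C False by (simp add: conc_def)
      qed
      finally show "itin lam p i = conc s ?Ic i" .
    qed
    ultimately show ?L using pr by (auto simp: tent_crit)
  qed
  have LBC: "?L \<Longrightarrow> ?B \<or> ?C"
  proof -
    assume ?L
    then obtain p where p: "0 \<le> p" "p \<le> tent lam crit" "itin lam p = conc s ?Ic" by blast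
    have pn: "(tent lam ^^ n) p = crit"
    proof -
      have "itin lam p n = SC" using p(3) assms(3) by (simp add: conc_def itin_def addr_def)
      then show ?thesis by (simp add: itin_def addr_SC)
    qed
    have pk: "\<forall>k<n. (tent lam ^^ k) p \<noteq> crit"
    proof (intro allI impI)
      fix k assume "k < n"
      then have "s ! k \<in> set s" using assms(3) by simp
      then have "s ! k \<in> {S0, S1}" using assms(4) by blast
      then have "itin lam p k \<in> {S0, S1}" using p(3) assms(3,4) \<open>k < n\<close> by (auto simp: conc_def)
      then show "(tent lam ^^ k) p \<noteq> crit" by (auto simp: itin_def addr_def)
    qed
    show "?B \<or> ?C"
    proof (cases "p = tent lam crit")
      case False
      then have plt: "p < tent lam crit" using p(2) by simp
      have ?B
      proof (intro allI impI)
        fix k assume k: "k \<le> n"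
        define x where "x = (tent lam ^^ k) p"
        have sh: "shift k (conc s ?Ic) = itin lam x" unfolding x_def using p(3) itin_shift[of k lam p] by simp
        have xle: "x \<le> tent lam crit" using tent_range[OF l _ p(1), of k] p(2) assms(2)
          by (simp add: x_def tent_crit)
        have "x \<noteq> tent lam crit"
        proof (cases k)
          case 0 then show ?thesis using False by (simp add: x_def)
        next
          case (Suc k')
          then have "x = tent lam ((tent lam ^^ k') p)" by (simp add: x_def)
          moreover have "(tent lam ^^ k') p \<noteq> crit" using pk Suc k by simp
          ultimately show ?thesis using tent_eq_max[OF l, of "(tent lam ^^ k') p"] by auto
        qed
        then have "x < tent lam crit" using xle by simp
        moreover have "SC \<in> range (itin lam x)"
        proof
          have "itin lam x (n - k) = addr ((tent lam ^^ n) p)"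
          proof -
            have "n = (n - k) + k" using k by simp
            then have "(tent lam ^^ n) p = (tent lam ^^ (n - k)) ((tent lam ^^ k) p)"
              by (metis comp_apply funpow_add)
            then show ?thesis unfolding itin_def x_def by simp
          qed
          then show "SC = itin lam x (n - k)" using pn by (simp add: addr_def)
        qed simp
        ultimately show "plex_less (shift k (conc s ?Ic)) (kneading lam)"
          using below_K[OF assms(1)] sh by simp
      qed
      then show ?thesis by blast
    next
      case True
      have n1: "n \<ge> 1"
      proof (rule ccontr)
        assume "\<not> n \<ge> 1" then have "n = 0" by simp
        then have "p = crit" using pn by simp
        then show False using True assms(1) by (simp add: tent_def crit_def)
      qed
      have pm: "(tent lam ^^ Suc n) crit = crit"
        using pn True by (simp add: funpow_Suc_right del: funpow.simps)
      have pj: "\<forall>j. 0 < j \<and> j < Suc n \<longrightarrow> (tent lam ^^ j) crit \<noteq> crit"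
      proof (intro allI impI)
        fix j assume j: "0 < j \<and> j < Suc n"
        then obtain j' where j': "j = Suc j'" by (cases j) auto
        have "(tent lam ^^ j) crit = (tent lam ^^ j') p"
          using True j' by (simp add: funpow_Suc_right del: funpow.simps)
        then show "(tent lam ^^ j) crit \<noteq> crit" using pk j j' by simp
      qed
      have ip: "?Ic = per (SC # s)"
      proof
        fix i
        have "?Ic i = addr ((tent lam ^^ (i mod Suc n)) crit)"
          unfolding itin_def using per_mod[OF pm] by simp
        also have "\<dots> = per (SC # s) i"
        proof (cases "i mod Suc n")
          case 0 then show ?thesis using assms(3) by (simp add: per_def addr_def)
        next
          case (Suc r)
          have "i mod Suc n < Suc n" by simp
          then have r: "r < n" using Suc by simp
          have "(tent lam ^^ (i mod Suc n)) crit = (tent lam ^^ r) p"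
            using True Suc by (simp add: funpow_Suc_right del: funpow.simps)
          moreover have "addr ((tent lam ^^ r) p) = s ! r"
          proof -
            have "itin lam p r = conc s ?Ic r" using p(3) by simp
            then show ?thesis using r assms(3) by (simp add: itin_def conc_def)
          qed
          ultimately show ?thesis using Suc assms(3) by (simp add: per_def)
        qed
        finally show "?Ic i = per (SC # s) i" .
      qed
      have ?C
        using pm pj ip n1 assms(3,4)
        by (intro exI[of _ "Suc n"] exI[of _ s] exI[of _ 0]) auto
      then show ?thesis by blast
    qed
  qed
  show ?thesis using AB BL CL LBC by blast
qed


end
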